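(* For $\gamma>1$, consider the Tsallis scoring rule with parameter $\gamma$ on the forecast domain $\mathcal{D}=\Delta^n$, i.e. the scoring rule given by $G(\mathbf{p})=\sum_{j=1}^n p_j^{\gamma}$. If $1<\gamma\le2$, this scoring rule has convex exposure. If $\gamma>2$ and $n>2$, it does not have convex exposure.
   Context: $\Delta^n$ is the standard simplex in $\mathbb{R}^n$. The scoring rule given by a differentiable strictly convex $G$ is $s(\mathbf{p};j)=G(\mathbf{p})+\langle\nabla G(\mathbf{p}),\delta_j-\mathbf{p}\rangle$ ($\delta_j$ the $j$-th standard basis vector). Its exposure function is $\mathbf{g}=\nabla G$, with values understood modulo translation by the all-ones vector (equivalently projected onto $\{\mathbf{x}:\sum_i x_i=0\}$). Convex exposure means the range of $\mathbf{g}$ is a convex set. *)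

theory Defs
  imports "HOL-Analysis.Analysis"
begin

text \<open>Standard simplex in R^n; the index type 'n has CARD('n) = n elements.\<close>
definition prob_simplex :: "(real^'n) set" where
  "prob_simplex = {p. (\<forall>i. 0 \<le> p $ i) \<and> (\<Sum>i\<in>UNIV. p $ i) = 1}"

definition tsallis_G :: "real \<Rightarrow> real^'n \<Rightarrow> real" where
  "tsallis_G \<gamma> p = (\<Sum>j\<in>UNIV. (p $ j) powr \<gamma>)"

text \<open>Its exposure function g = grad G, i.e. g(p)_j = gamma * p_j^(gamma-1).\<close>
definition tsallis_exposure :: "real \<Rightarrow> real^'n \<Rightarrow> real^'n" where
  "tsallis_exposure \<gamma> p = (\<chi> j. \<gamma> * (p $ j) powr (\<gamma> - 1))"

text \<open>Projection onto the hyperplane {x. sum_i x_i = 0} (quotient by the all-ones vector).\<close>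
definition proj_sum_zero :: "real^'n \<Rightarrow> real^'n" where
  "proj_sum_zero x = x - ((\<Sum>i\<in>UNIV. x $ i) / real CARD('n)) *\<^sub>R (\<chi> i. 1)"

definition has_convex_exposure :: "(real^'n \<Rightarrow> real^'n) \<Rightarrow> (real^'n) set \<Rightarrow> bool" where
  "has_convex_exposure g D \<longleftrightarrow> convex (proj_sum_zero ` g ` D)"

end

theory Submission
  imports Defs
begin

lemma powr_cvx:
  fixes b X Y u v :: real
  assumes b: "b \<ge> 1" and X: "X \<ge> 0" and Y: "Y \<ge> 0" and u: "u \<ge> 0" and v: "v \<ge> 0"
    and uv: "u + v = 1"
  shows "(u * X + v * Y) powr b \<le> u * X powr b + v * Y powr b"
proof -
  have le1: "w powr b \<le> w" if "0 \<le> w" "w \<le> 1" for w :: real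
  proof -
    have "w powr b \<le> w powr 1" using powr_mono'[OF b that] .
    then show ?thesis using that by (simp add: powr_one)
  qed
  show ?thesis
  proof (cases "X = 0")
    case True
    have "(v * Y) powr b = v powr b * Y powr b" using v Y by (simp add: powr_mult)
    also have "\<dots> \<le> v * Y powr b" using le1[of v] v uv u by (simp add: mult_right_mono)
    finally show ?thesis using True u b by simp
  next
    case Xn: False
    show ?thesis
    proof (cases "Y = 0")
      case True
      have "(u * X) powr b = u powr b * X powr b" using u X by (simp add: powr_mult)
      also have "\<dots> \<le> u * X powr b" using le1[of u] v uv u by (simp add: mult_right_mono)
      finally show ?thesis using True v b by simp
    next
      case False
      have "X \<in> {0<..}" "Y \<in> {0<..}" using X Y Xn False by auto
      from convex_onD[OF powr_convex[OF b] _ _ this, of v] u v uv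
      have "((1 - v) * X + v * Y) powr b \<le> (1 - v) * X powr b + v * Y powr b" by simp
      moreover have "u = 1 - v" using uv by simp
      ultimately show ?thesis by simp
    qed
  qed
qed

lemma proj_shift:
  "proj_sum_zero (x + c *\<^sub>R (\<chi> i. 1)) = proj_sum_zero (x::real^'n)"
proof -
  have n: "real CARD('n) > 0" by simp
  have s: "(\<Sum>i\<in>UNIV. (x + c *\<^sub>R (\<chi> i. 1)) $ i) = (\<Sum>i\<in>UNIV. x $ i) + c * real CARD('n)"
    by (simp add: sum.distrib)
  show ?thesis unfolding proj_sum_zero_def s
    using n by (simp add: vec_eq_iff field_simps)
qed

lemma proj_lin:
  "proj_sum_zero (u *\<^sub>R x + v *\<^sub>R y) = u *\<^sub>R proj_sum_zero x + v *\<^sub>R proj_sum_zero (y::real^'n)"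
  unfolding proj_sum_zero_def
  by (simp add: vec_eq_iff sum.distrib sum_distrib_left[symmetric] field_simps)

lemma proj_eq_D:
  assumes "proj_sum_zero x = proj_sum_zero (y::real^'n)"
  shows "\<exists>c. \<forall>j. x $ j = y $ j + c"
proof -
  have "\<forall>j. x $ j - (\<Sum>i\<in>UNIV. x $ i) / real CARD('n) = y $ j - (\<Sum>i\<in>UNIV. y $ i) / real CARD('n)"
    using assms unfolding proj_sum_zero_def by (simp add: vec_eq_iff)
  then show ?thesis
    by (intro exI[of _ "(\<Sum>i\<in>UNIV. x $ i) / real CARD('n) - (\<Sum>i\<in>UNIV. y $ i) / real CARD('n)"]) 
       (auto simp: algebra_simps)
qed


lemma conv_part:
  fixes \<gamma> :: real
  assumes g1: "\<gamma> > 1" and g2: "\<gamma> \<le> 2"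
  shows "convex (proj_sum_zero ` tsallis_exposure \<gamma> ` (prob_simplex :: (real^'n) set))"
proof -
  define a where "a = \<gamma> - 1"
  define b where "b = 1 / a"
  have a0: "a > 0" using g1 by (simp add: a_def)
  have b1: "b \<ge> 1" using g2 a0 by (simp add: a_def b_def field_simps)
  have ba: "b * a = 1" using a0 by (simp add: b_def)
  have g0: "\<gamma> > 0" using g1 by simp
  have inv: "(x powr a) powr b = x" if "x \<ge> 0" for x :: real
    using that by (simp add: powr_powr mult.commute[of a b] ba powr_one)
  have key: "u *\<^sub>R proj_sum_zero (tsallis_exposure \<gamma> p) + v *\<^sub>R proj_sum_zero (tsallis_exposure \<gamma> q)
      \<in> proj_sum_zero ` tsallis_exposure \<gamma> ` (prob_simplex :: (real^'n) set)"
    if p: "p \<in> prob_simplex" and q: "q \<in> prob_simplex" and u: "u \<ge> 0" and v: "v \<ge> 0"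
      and uv: "u + v = 1" for p q :: "real^'n" and u v :: real
  proof -
    have pn: "\<And>j. p $ j \<ge> 0" and ps: "(\<Sum>j\<in>UNIV. p $ j) = 1" using p by (auto simp: prob_simplex_def)
    have qn: "\<And>j. q $ j \<ge> 0" and qs: "(\<Sum>j\<in>UNIV. q $ j) = 1" using q by (auto simp: prob_simplex_def)
    define z where "z = u *\<^sub>R tsallis_exposure \<gamma> p + v *\<^sub>R tsallis_exposure \<gamma> q"
    have zj: "z $ j = \<gamma> * (u * p $ j powr a + v * q $ j powr a)" for j
      by (simp add: z_def tsallis_exposure_def a_def algebra_simps)
    have zpos: "z $ j \<ge> 0" for j unfolding zj using g0 u v by simp
    define m where "m = Min (range (\<lambda>j. z $ j))"
    have mle: "m \<le> z $ j" for j unfolding m_def by (rule Min_le) auto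
    have "m \<in> range (\<lambda>j. z $ j)" unfolding m_def by (rule Min_in) auto
    then obtain j0 where j0: "z $ j0 = m" by auto
    define \<Phi> where "\<Phi> c = (\<Sum>j\<in>UNIV. ((z $ j - c) / \<gamma>) powr b)" for c
    have cont: "continuous_on {m - \<gamma>..m} \<Phi>"
      unfolding \<Phi>_def
    proof (intro continuous_on_sum continuous_on_powr')
      fix j :: 'n
      show "continuous_on {m - \<gamma>..m} (\<lambda>c. (z $ j - c) / \<gamma>)" using g0 by (intro continuous_intros) auto
      show "continuous_on {m - \<gamma>..m} (\<lambda>c. b)" by (intro continuous_intros)
      show "\<forall>c\<in>{m - \<gamma>..m}. 0 \<le> (z $ j - c) / \<gamma> \<and> ((z $ j - c) / \<gamma> = 0 \<longrightarrow> 0 < b)"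
        using mle[of j] g0 b1 by auto
    qed
    have Phim: "\<Phi> m \<le> 1"
    proof -
      have "((z $ j - m) / \<gamma>) powr b \<le> u * p $ j + v * q $ j" for j
      proof -
        have "((z $ j - m) / \<gamma>) powr b \<le> (z $ j / \<gamma>) powr b"
          using mle[of j] g0 b1 zpos[of j] j0 zpos[of j0]
          by (intro powr_mono2) (auto simp: divide_right_mono)
        also have "z $ j / \<gamma> = u * p $ j powr a + v * q $ j powr a" using g0 by (simp add: zj)
        also have "(u * p $ j powr a + v * q $ j powr a) powr b
            \<le> u * (p $ j powr a) powr b + v * (q $ j powr a) powr b"
          by (rule powr_cvx[OF b1 _ _ u v uv]) auto
        also have "\<dots> = u * p $ j + v * q $ j" using inv pn qn by simp
        finally show ?thesis .
      qed
      then have "\<Phi> m \<le> (\<Sum>j\<in>UNIV. u * p $ j + v * q $ j)" unfolding \<Phi>_def by (rule sum_mono)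
      also have "\<dots> = 1" using ps qs uv by (simp add: sum.distrib sum_distrib_left[symmetric])
      finally show ?thesis .
    qed
    have Phig: "\<Phi> (m - \<gamma>) \<ge> 1"
    proof -
      have "1 = ((z $ j0 - (m - \<gamma>)) / \<gamma>) powr b" using j0 g0 by simp
      also have "\<dots> \<le> \<Phi> (m - \<gamma>)" unfolding \<Phi>_def
        by (rule member_le_sum) auto
      finally show ?thesis .
    qed
    obtain c where c: "m - \<gamma> \<le> c" "c \<le> m" "\<Phi> c = 1"
      using IVT2'[of \<Phi> m 1 "m - \<gamma>", OF Phim Phig _ cont] g0 by auto
    define r where "r = (\<chi> j. ((z $ j - c) / \<gamma>) powr b)"
    have rS: "r \<in> prob_simplex" using c(3) unfolding prob_simplex_def r_def \<Phi>_def by auto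
    have "tsallis_exposure \<gamma> r = z + (- c) *\<^sub>R (\<chi> i. 1)"
    proof -
      have "\<gamma> * (((z $ j - c) / \<gamma>) powr b) powr (\<gamma> - 1) = z $ j - c" for j
      proof -
        have nn: "(z $ j - c) / \<gamma> \<ge> 0" using c(2) mle[of j] g0 by auto
        have "(((z $ j - c) / \<gamma>) powr b) powr (\<gamma> - 1) = (z $ j - c) / \<gamma>"
          using nn g0 c(2) mle[of j] by (simp add: powr_powr ba a_def[symmetric] powr_one)
        then show ?thesis using g0 by simp
      qed
      then show ?thesis by (simp add: vec_eq_iff tsallis_exposure_def r_def)
    qed
    then have "proj_sum_zero (tsallis_exposure \<gamma> r) = proj_sum_zero z" using proj_shift[of z "- c"] by simp
    also have "\<dots> = u *\<^sub>R proj_sum_zero (tsallis_exposure \<gamma> p) + v *\<^sub>R proj_sum_zero (tsallis_exposure \<gamma> q)"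
      unfolding z_def by (rule proj_lin)
    finally show ?thesis using rS by (metis image_eqI)
  qed
  show ?thesis unfolding convex_def using key by blast
qed


lemma nonconv_part:
  fixes \<gamma> :: real
  assumes g2: "\<gamma> > 2" and n3: "CARD('n) > 2"
  shows "\<not> convex (proj_sum_zero ` tsallis_exposure \<gamma> ` (prob_simplex :: (real^'n) set))"
proof
  assume cv: "convex (proj_sum_zero ` tsallis_exposure \<gamma> ` (prob_simplex :: (real^'n) set))"
  define a where "a = \<gamma> - 1"
  have a1: "a > 1" using g2 by (simp add: a_def)
  have g0: "\<gamma> > 0" using g2 by simp
  obtain i1 :: 'n where True by simp
  have "UNIV \<noteq> {i1}"
  proof
    assume h: "UNIV = {i1}"
    have "CARD('n) = card {i1}" by (simp only: h)
    then have "CARD('n) = 1" by simp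
    then show False using n3 by simp
  qed
  then obtain i2 :: 'n where i12: "i2 \<noteq> i1" by auto
  have "UNIV \<noteq> {i1, i2}"
  proof
    assume h: "UNIV = {i1, i2}"
    have "CARD('n) = card {i1, i2}" by (simp only: h)
    then have "CARD('n) \<le> 2" using i12 by simp
    then show False using n3 by simp
  qed
  then obtain i3 :: 'n where i3: "i3 \<noteq> i1" "i3 \<noteq> i2" by auto
  define e where "e k = (axis k 1 :: real^'n)" for k
  have eS: "e k \<in> prob_simplex" for k
    by (simp add: prob_simplex_def e_def axis_def if_distrib sum.delta cong: if_cong)
  have ge: "tsallis_exposure \<gamma> (e k) $ j = (if j = k then \<gamma> else 0)" for k j
    by (simp add: tsallis_exposure_def e_def axis_def)
  have "(1/2) *\<^sub>R proj_sum_zero (tsallis_exposure \<gamma> (e i1)) + (1/2) *\<^sub>R proj_sum_zero (tsallis_exposure \<gamma> (e i2))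
      \<in> proj_sum_zero ` tsallis_exposure \<gamma> ` (prob_simplex :: (real^'n) set)"
    by (rule convexD[OF cv]) (use eS in auto)
  then obtain r where rS: "r \<in> (prob_simplex :: (real^'n) set)"
    and req: "proj_sum_zero (tsallis_exposure \<gamma> r)
       = proj_sum_zero ((1/2) *\<^sub>R tsallis_exposure \<gamma> (e i1) + (1/2) *\<^sub>R tsallis_exposure \<gamma> (e i2))"
    by (auto simp: proj_lin)
  obtain c where c: "\<And>j. tsallis_exposure \<gamma> r $ j
      = ((1/2) *\<^sub>R tsallis_exposure \<gamma> (e i1) + (1/2) *\<^sub>R tsallis_exposure \<gamma> (e i2)) $ j + c"
    using proj_eq_D[OF req] by blast
  have rn: "\<And>j. r $ j \<ge> 0" and rs: "(\<Sum>j\<in>UNIV. r $ j) = 1" using rS by (auto simp: prob_simplex_def)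
  have ex: "tsallis_exposure \<gamma> r $ j = \<gamma> * r $ j powr a" for j
    by (simp add: tsallis_exposure_def a_def)
  have "\<gamma> * r $ i3 powr a = c" using c[of i3] i3 by (simp add: ex ge)
  moreover have "\<gamma> * r $ i3 powr a \<ge> 0" using g0 by simp
  ultimately have c0: "c \<ge> 0" by simp
  have big: "r $ i > 1/2" if "i = i1 \<or> i = i2" for i
  proof -
    have "\<gamma> * r $ i powr a = \<gamma> / 2 + c" using c[of i] that i12 by (auto simp: ex ge)
    then have "\<gamma> * r $ i powr a \<ge> \<gamma> * (1/2)" using c0 by simp
    then have h: "r $ i powr a \<ge> 1/2" using g0 by simp
    show ?thesis
    proof (rule ccontr)
      assume "\<not> r $ i > 1/2"
      then have "r $ i powr a \<le> (1/2) powr a" using rn[of i] a1 by (intro powr_mono2) auto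
      also have "\<dots> < (1/2) powr 1" by (rule powr_less_mono') (use a1 in auto)
      finally show False using h by simp
    qed
  qed
  have "r $ i1 + r $ i2 = (\<Sum>j\<in>{i1, i2}. r $ j)" using i12 by simp
  also have "\<dots> \<le> (\<Sum>j\<in>UNIV. r $ j)" by (rule sum_mono2) (auto simp: rn)
  finally show False using big[of i1] big[of i2] rs by simp
qed

theorem propositionF8:
  fixes \<gamma> :: real
  assumes "\<gamma> > 1"
  shows "(\<gamma> \<le> 2 \<longrightarrow>
            has_convex_exposure (tsallis_exposure \<gamma>) (prob_simplex :: (real^'n) set))
       \<and> (\<gamma> > 2 \<and> CARD('n) > 2 \<longrightarrow>
            \<not> has_convex_exposure (tsallis_exposure \<gamma>) (prob_simplex :: (real^'n) set))"
  using conv_part[OF assms] nonconv_part unfolding has_convex_exposure_def by blast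

end
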